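(* Let $0<\alpha<1$ and $f>0$. Then the function $$t\mapsto\left(\frac{t}{(1-\alpha)f+\alpha t}\right)^{\frac{1}{1-\alpha}}\cdot\frac{f}{t}$$ is increasing in $t$ on the range of $t>0$ with $\frac{f}{t}\ge 1$. *)

theory Defs
  imports "HOL-Analysis.Analysis"
begin

end

theory Submission
  imports Defs
begin

theorem mainTheorem10:
  fixes \<alpha> f :: real
  assumes "0 < \<alpha>" and "\<alpha> < 1" and "0 < f"
  shows "mono_on {t::real. 0 < t \<and> f / t \<ge> 1}
           (\<lambda>t. (t / ((1 - \<alpha>) * f + \<alpha> * t)) powr (1 / (1 - \<alpha>)) * (f / t))"
proof (rule mono_onI)
  define p where "p = 1 / (1 - \<alpha>)"
  define D where "D t = (1 - \<alpha>) * f + \<alpha> * t" for t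
  define h where "h t = \<alpha> * ln t - ln (D t)" for t
  have p1: "p * \<alpha> = p - 1" using assms unfolding p_def by (simp add: field_simps)
  have pp: "p > 0" using assms unfolding p_def by simp
  have Dpos: "D t > 0" if "t > 0" for t using assms that unfolding D_def
    by (smt (verit) mult_pos_pos)
  have eq: "(t / D t) powr p * (f / t) = f * exp (p * h t)" if "t > 0" for t
  proof -
    have "(t / D t) powr p * (f / t) = exp (p * (ln t - ln (D t)) + ln f - ln t)"
      using that Dpos[OF that] assms
      by (simp add: powr_def ln_div exp_add exp_diff)
    also have "p * (ln t - ln (D t)) + ln f - ln t = ln f + p * h t"
      proof -
      have "p * ln t = ln t + \<alpha> * (p * ln t)" using p1 by (metis add.commute diff_add_cancel mult.commute mult.left_commute ring_class.ring_distribs(2) mult_1)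
      thus ?thesis unfolding h_def by (simp add: algebra_simps)
    qed
    also have "exp (ln f + p * h t) = f * exp (p * h t)" using assms by (simp add: exp_add)
    finally show ?thesis .
  qed
  fix s t assume s: "s \<in> {t::real. 0 < t \<and> f / t \<ge> 1}" and t: "t \<in> {t::real. 0 < t \<and> f / t \<ge> 1}" and st: "s \<le> t"
  have s0: "s > 0" and t0: "t > 0" using s t by auto
  have tf: "t \<le> f" using t by (auto simp add: le_divide_eq)
  have "h s \<le> h t"
  proof (rule DERIV_nonneg_imp_nondecreasing[OF st])
    fix x assume x: "s \<le> x" "x \<le> t"
    have x0: "x > 0" using x s0 by simp
    have "(h has_real_derivative (\<alpha> * (1 / x) - \<alpha> / D x)) (at x)"
      unfolding h_def D_def
      using Dpos[OF x0] x0 unfolding D_def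
      by (auto intro!: derivative_eq_intros)
    moreover have "\<alpha> * (1 / x) - \<alpha> / D x \<ge> 0"
    proof -
      have "x \<le> D x" unfolding D_def proof -
        have "(1 - \<alpha>) * x \<le> (1 - \<alpha>) * f" using x tf assms by (intro mult_left_mono) auto
        thus "x \<le> (1 - \<alpha>) * f + \<alpha> * x" by (simp add: algebra_simps)
      qed
      hence "1 / D x \<le> 1 / x" using x0 by (simp add: frac_le)
      hence "\<alpha> * (1 / D x) \<le> \<alpha> * (1 / x)" using assms by (intro mult_left_mono) auto
      thus ?thesis by simp
    qed
    ultimately show "\<exists>y. (h has_real_derivative y) (at x) \<and> 0 \<le> y" by blast
  qed
  hence "f * exp (p * h s) \<le> f * exp (p * h t)" using pp assms
    by (simp add: mult_left_mono)
  thus "(s / ((1 - \<alpha>) * f + \<alpha> * s)) powr (1 / (1 - \<alpha>)) * (f / s)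
        \<le> (t / ((1 - \<alpha>) * f + \<alpha> * t)) powr (1 / (1 - \<alpha>)) * (f / t)"
    using eq[OF s0] eq[OF t0] unfolding D_def p_def by simp
qed

end
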